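(* Let $a\in(\frac12,\frac23]$. Define \[ d_n=\begin{cases} t_1, & n=0,\\ \min\big\{\frac{t_1+1}{1},\dots,\frac{t_n+1}{n},\frac{t_{n+1}}{n+1}\big\}, & 1\le n<\sigma_a,\\ \min\big\{\frac{t_1+1}{1},\dots,\frac{t_n+1}{n}\big\}, & n=\sigma_a<\infty.\end{cases} \] Then for any $x\in[0,1)$ and integers $k,n$ with $0\le n\le\sigma_a$ and $0\le k\le\sigma_a(x)$ we have $d_n\ge t_1$ and \[ t_k(x)\ge k\,d_n-\mathbb 1\{n\neq0\}. \]
   Context: For $a\in[\frac12,\frac23]$ let $I_a=\big(\frac{2a-1}{1-a},1\big)$ and define $T_a$ on $[0,\frac1{1-a}]\setminus I_a$ by $T_a(x)=\frac1a(x+1)$ for $0\le x\le\frac{2a-1}{1-a}$ and $T_a(x)=\frac1a(x-1)$ for $1\le x\le\frac1{1-a}$; for $a=\frac23$ set $T_{2/3}(1)=0$. Let $\varkappa_a(x)=\inf\{k\ge0:T_a^k(x)\in I_a\}$ ($\inf\emptyset=\infty$). Let $\sigma_a(x)=\sum_{n=1}^{\varkappa_a(x)}\mathbb 1\{T_a^n(x)<1\}$ (the number of returns to $[0,1)$), $t_0(x)=0$ and $t_k(x)=\inf\{n>t_{k-1}(x):T_a^n(x)<1\}$ for $1\le k<\sigma_a(x)+1$ (the return times). Write $\sigma_a=\sigma_a(0)$ and $t_k=t_k(0)$. *)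

theory Defs
  imports Complex_Main "HOL-Library.Extended_Nat"
begin

definition hole :: "real \<Rightarrow> real set" where
  "hole a = {(2*a-1)/(1-a) <..< 1}"

(* The map T_a; values on the hole I_a are irrelevant (T_a undefined there).
   For a = 2/3 the convention T_{2/3}(1) = 0 is built in. *)
definition Tmap :: "real \<Rightarrow> real \<Rightarrow> real" where
  "Tmap a x = (if a = 2/3 \<and> x = 1 then 0
               else if x \<le> (2*a-1)/(1-a) then (x+1)/a else (x-1)/a)"

definition kappa :: "real \<Rightarrow> real \<Rightarrow> enat" where
  "kappa a x = (if \<exists>k. (Tmap a ^^ k) x \<in> hole a
                then enat (LEAST k. (Tmap a ^^ k) x \<in> hole a) else \<infinity>)"

definition sigma :: "real \<Rightarrow> real \<Rightarrow> enat" where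
  "sigma a x = (let S = {n::nat. 1 \<le> n \<and> enat n \<le> kappa a x \<and> (Tmap a ^^ n) x < 1}
                in if finite S then enat (card S) else \<infinity>)"

(* return times t_k(x); meaningful for k \<le> sigma a x *)
fun tret :: "real \<Rightarrow> real \<Rightarrow> nat \<Rightarrow> nat" where
  "tret a x 0 = 0"
| "tret a x (Suc k) = (LEAST n. tret a x k < n \<and> (Tmap a ^^ n) x < 1)"

(* d_n, with t_j = t_j(0); meaningful for n \<le> sigma_a = sigma a 0 *)
definition dseq :: "real \<Rightarrow> nat \<Rightarrow> real" where
  "dseq a n = (if n = 0 then real (tret a 0 1)
     else if enat n < sigma a 0 then
       min (Min ((\<lambda>j. (real (tret a 0 j) + 1) / real j) ` {1..n}))
           (real (tret a 0 (n+1)) / real (n+1))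
     else Min ((\<lambda>j. (real (tret a 0 j) + 1) / real j) ` {1..n}))"

end

theory Submission
  imports Defs
begin

abbreviation orb :: "real \<Rightarrow> real \<Rightarrow> nat \<Rightarrow> real" where
  "orb a y m \<equiv> (Tmap a ^^ m) y"

definition hasret :: "real \<Rightarrow> real \<Rightarrow> nat \<Rightarrow> bool" where
  "hasret a y i \<longleftrightarrow> (\<forall>l<i. \<exists>m>tret a y l. orb a y m < 1)"

lemma hasret_mono: "hasret a y i \<Longrightarrow> j \<le> i \<Longrightarrow> hasret a y j"
  unfolding hasret_def by auto

lemma hasret_Suc: "hasret a y (Suc i) \<longleftrightarrow> hasret a y i \<and> (\<exists>m>tret a y i. orb a y m < 1)"
  unfolding hasret_def using less_Suc_eq by auto

lemma tret_Suc_props: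
  assumes "\<exists>m>tret a y l. orb a y m < 1"
  shows "tret a y l < tret a y (Suc l)" "orb a y (tret a y (Suc l)) < 1"
    "\<And>m. tret a y l < m \<Longrightarrow> m < tret a y (Suc l) \<Longrightarrow> orb a y m \<ge> 1"
    "\<And>m. tret a y l < m \<Longrightarrow> orb a y m < 1 \<Longrightarrow> tret a y (Suc l) \<le> m"
proof -
  have "tret a y l < tret a y (Suc l) \<and> orb a y (tret a y (Suc l)) < 1"
    using LeastI_ex[OF assms] by simp
  then show "tret a y l < tret a y (Suc l)" "orb a y (tret a y (Suc l)) < 1" by auto
  show "\<And>m. tret a y l < m \<Longrightarrow> m < tret a y (Suc l) \<Longrightarrow> orb a y m \<ge> 1"
    using not_less_Least by fastforce
  show "\<And>m. tret a y l < m \<Longrightarrow> orb a y m < 1 \<Longrightarrow> tret a y (Suc l) \<le> m"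
    by (simp add: Least_le)
qed

lemma tret_mono: "hasret a y i \<Longrightarrow> l < l' \<Longrightarrow> l' \<le> i \<Longrightarrow> tret a y l < tret a y l'"
proof (induction l')
  case 0 then show ?case by simp
next
  case (Suc l')
  have h: "\<exists>m>tret a y l'. orb a y m < 1" using Suc.prems unfolding hasret_def by auto
  show ?case
  proof (cases "l = l'")
    case True then show ?thesis using tret_Suc_props(1)[OF h] by simp
  next
    case False
    then have "tret a y l < tret a y l'" using Suc by auto
    then show ?thesis using tret_Suc_props(1)[OF h] by simp
  qed
qed

lemma tret_ge: "hasret a y i \<Longrightarrow> l \<le> i \<Longrightarrow> l \<le> tret a y l"
proof (induction l)
  case 0 then show ?case by simp
next
  case (Suc l)
  then have "tret a y l < tret a y (Suc l)" using tret_mono[of a y i l "Suc l"] by auto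
  then show ?case using Suc by auto
qed

lemma tret_ret: "hasret a y i \<Longrightarrow> 1 \<le> l \<Longrightarrow> l \<le> i \<Longrightarrow> orb a y (tret a y l) < 1"
proof -
  assume h: "hasret a y i" "1 \<le> l" "l \<le> i"
  then obtain l0 where l0: "l = Suc l0" by (cases l) auto
  then have "\<exists>m>tret a y l0. orb a y m < 1" using h unfolding hasret_def by auto
  then show ?thesis using tret_Suc_props(2) l0 by simp
qed

lemma ret_char: "hasret a y i \<Longrightarrow> 1 \<le> m \<Longrightarrow> m \<le> tret a y i \<Longrightarrow> orb a y m < 1 \<Longrightarrow>
   \<exists>l. 1 \<le> l \<and> l \<le> i \<and> m = tret a y l"
proof (induction i)
  case 0 then show ?case by simp
next
  case (Suc i)
  have h: "\<exists>m>tret a y i. orb a y m < 1" using Suc.prems unfolding hasret_def by auto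
  show ?case
  proof (cases "m \<le> tret a y i")
    case True
    then show ?thesis using Suc hasret_mono[of a y "Suc i" i] by fastforce
  next
    case False
    then have "m = tret a y (Suc i)" using tret_Suc_props(3)[OF h, of m] Suc.prems by force
    then show ?thesis by auto
  qed
qed

lemma orb_shift: "orb a (orb a z s) m = orb a z (m + s)"
  by (simp add: funpow_add)

lemma shift:
  assumes "hasret a z (j+i)"
  shows "tret a z (j+i) = tret a z j + tret a (orb a z (tret a z j)) i \<and> hasret a (orb a z (tret a z j)) i"
  using assms
proof (induction i)
  case 0 then show ?case by (simp add: hasret_def)
next
  case (Suc i)
  define s where "s = tret a z j"
  define z' where "z' = orb a z s"
  have hz: "hasret a z (j+i)" using Suc.prems hasret_mono by force
  have IH: "tret a z (j+i) = s + tret a z' i" "hasret a z' i" using Suc.IH[OF hz] s_def z'_def by auto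
  obtain m where m: "m > tret a z (j+i)" "orb a z m < 1"
    using Suc.prems unfolding hasret_def by force
  have os: "\<And>q. orb a z' q = orb a z (q + s)" unfolding z'_def by (rule orb_shift)
  have ex: "\<exists>m'>tret a z' i. orb a z' m' < 1"
    using m IH os by (intro exI[of _ "m - s"]) auto
  have hz': "hasret a z' (Suc i)" using IH(2) ex hasret_Suc by blast
  have "tret a z (Suc (j+i)) = s + tret a z' (Suc i)"
  proof -
    have "tret a z (Suc (j+i)) = (LEAST n. tret a z (j+i) < n \<and> orb a z n < 1)" by simp
    also have "\<dots> = s + tret a z' (Suc i)"
    proof (rule Least_equality)
      show "tret a z (j + i) < s + tret a z' (Suc i) \<and> orb a z (s + tret a z' (Suc i)) < 1"
        using tret_Suc_props(1,2)[OF ex] IH os[of "tret a z' (Suc i)"] by (simp add: add.commute)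
    next
      fix n assume n: "tret a z (j + i) < n \<and> orb a z n < 1"
      then have "tret a z' i < n - s" "orb a z' (n - s) < 1" using IH os[of "n-s"] by auto
      then have "tret a z' (Suc i) \<le> n - s" using tret_Suc_props(4)[OF ex] by blast
      then show "s + tret a z' (Suc i) \<le> n" using n IH by linarith
    qed
    finally show ?thesis .
  qed
  then show ?case using hz' s_def z'_def by simp
qed


lemma c_le1: "1/2 < a \<Longrightarrow> a \<le> 2/3 \<Longrightarrow> (2*a-1)/(1-a) \<le> (1::real)"
  by (simp add: divide_simps)

lemma c_lt1: "1/2 < a \<Longrightarrow> a < 2/3 \<Longrightarrow> (2*a-1)/(1-a) < (1::real)"
  by (simp add: divide_simps)

lemma c_pos: "1/2 < a \<Longrightarrow> a \<le> 2/3 \<Longrightarrow> (2*a-1)/(1-a) > (0::real)"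
  by (simp add: divide_simps)

lemma T_hi: assumes "1/2 < a" "a \<le> 2/3" "1 \<le> x" shows "Tmap a x = (x-1)/a"
proof (cases "a = 2/3 \<and> x = 1")
  case True then show ?thesis by (simp add: Tmap_def)
next
  case False
  have "\<not> x \<le> (2*a-1)/(1-a)"
  proof (cases "a = 2/3")
    case True
    then have "(2*a-1)/(1-a) = 1" by simp
    moreover have "x > 1" using False True assms by auto
    ultimately show ?thesis by linarith
  next
    case F: False
    then have "a < 2/3" using assms by simp
    then have "(2*a-1)/(1-a) < 1" using c_lt1[of a] assms by simp
    then show ?thesis using assms by linarith
  qed
  then show ?thesis using False by (simp add: Tmap_def)
qed

lemma T_lo: assumes "x < 1" "x \<le> (2*a-1)/(1-a)" shows "Tmap a x = (x+1)/a"
  using assms by (simp add: Tmap_def)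

lemma nohole_le: "x < 1 \<Longrightarrow> x \<notin> hole a \<Longrightarrow> x \<le> (2*a-1)/(1-a)"
  by (auto simp: hole_def)

lemma hole_lt1: "x \<in> hole a \<Longrightarrow> x < 1"
  by (auto simp: hole_def)

lemma zero_nohole: assumes "1/2 < a" "a \<le> 2/3" shows "(0::real) \<notin> hole a"
  using c_pos[OF assms] by (auto simp: hole_def)

lemma cmp:
  assumes a: "1/2 < a" "a \<le> 2/3" and z: "0 \<le> z"
  shows "(\<forall>m'<m. orb a 0 m' \<ge> 1 \<or> (orb a z m' < 1 \<and> orb a z m' \<notin> hole a)) \<Longrightarrow> orb a 0 m \<le> orb a z m"
proof (induction m)
  case 0 then show ?case using z by simp
next
  case (Suc m)
  have le: "orb a 0 m \<le> orb a z m" using Suc by auto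
  have c: "orb a 0 m \<ge> 1 \<or> (orb a z m < 1 \<and> orb a z m \<notin> hole a)" using Suc.prems by auto
  have ap: "a > 0" using a by simp
  show ?case
  proof (cases "orb a 0 m \<ge> 1")
    case True
    then have "orb a z m \<ge> 1" using le by simp
    then show ?thesis using T_hi[OF a True] T_hi[OF a] le ap by (simp add: divide_right_mono)
  next
    case False
    then have h: "orb a z m < 1" "orb a z m \<notin> hole a" using c by auto
    have h2: "orb a z m \<le> (2*a-1)/(1-a)" using nohole_le[OF h] .
    then have "orb a 0 m \<le> (2*a-1)/(1-a)" using le by simp
    then show ?thesis using T_lo[OF h(1) h2] T_lo[of "orb a 0 m" a] False le ap
      by (simp add: divide_right_mono)
  qed
qed

lemma nonneg:
  assumes a: "1/2 < a" "a \<le> 2/3" and z: "0 \<le> z"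
  shows "(\<forall>m'<m. orb a z m' \<notin> hole a) \<Longrightarrow> orb a z m \<ge> 0"
proof (induction m)
  case 0 then show ?case using z by simp
next
  case (Suc m)
  have ge: "orb a z m \<ge> 0" and nh: "orb a z m \<notin> hole a" using Suc by auto
  have ap: "a > 0" using a by simp
  show ?case
  proof (cases "orb a z m \<ge> 1")
    case True then show ?thesis using T_hi[OF a True] ap by simp
  next
    case False
    then have "orb a z m \<le> (2*a-1)/(1-a)" using nohole_le nh by simp
    then show ?thesis using T_lo[of "orb a z m" a] False ge ap by simp
  qed
qed


definition Sret :: "real \<Rightarrow> real \<Rightarrow> nat set" where
  "Sret a y = {n::nat. 1 \<le> n \<and> enat n \<le> kappa a y \<and> (Tmap a ^^ n) y < 1}"

lemma sigma_Sret: "sigma a y = (if finite (Sret a y) then enat (card (Sret a y)) else \<infinity>)"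
  unfolding sigma_def Sret_def Let_def by simp

lemma kappa_nohole: "enat m < kappa a y \<Longrightarrow> orb a y m \<notin> hole a"
proof -
  assume h: "enat m < kappa a y"
  show ?thesis
  proof (cases "\<exists>k. orb a y k \<in> hole a")
    case True
    then have "kappa a y = enat (LEAST k. orb a y k \<in> hole a)" by (simp add: kappa_def)
    then have "m < (LEAST k. orb a y k \<in> hole a)" using h by simp
    then show ?thesis using not_less_Least by blast
  next
    case False then show ?thesis by blast
  qed
qed

lemma sigma_inv:
  "enat i \<le> sigma a y \<Longrightarrow> hasret a y i \<and> (1 \<le> i \<longrightarrow> tret a y i \<in> Sret a y)
     \<and> card {m\<in>Sret a y. m \<le> tret a y i} = i"
proof (induction i)
  case 0
  have "{m\<in>Sret a y. m \<le> 0} = {}" by (auto simp: Sret_def)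
  then show ?case by (simp add: hasret_def)
next
  case (Suc i)
  have "enat i \<le> sigma a y" using Suc.prems
    by (meson Suc_ile_eq order_less_imp_le)
  then have IH: "hasret a y i" "1 \<le> i \<longrightarrow> tret a y i \<in> Sret a y"
    "card {m\<in>Sret a y. m \<le> tret a y i} = i" using Suc.IH by auto
  let ?S = "Sret a y"
  let ?A = "{m\<in>?S. m \<le> tret a y i}"
  have finA: "finite ?A" by simp
  have "\<not> ?S \<subseteq> ?A"
  proof
    assume sub: "?S \<subseteq> ?A"
    then have fin: "finite ?S" using finite_subset finA by blast
    then have "card ?S \<le> i" using card_mono[OF finA sub] IH(3) by simp
    moreover have "enat (Suc i) \<le> enat (card ?S)" using Suc.prems fin sigma_Sret[of a y] by simp
    ultimately show False by simp
  qed
  then obtain m where m: "m \<in> ?S" "\<not> m \<le> tret a y i" by blast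
  then have m2: "m > tret a y i" by simp
  have mo: "orb a y m < 1" using m by (simp add: Sret_def)
  have ex: "\<exists>m>tret a y i. orb a y m < 1" using m2 mo by blast
  have hr: "hasret a y (Suc i)" using IH(1) ex hasret_Suc by blast
  let ?t = "tret a y (Suc i)"
  have t1: "tret a y i < ?t" "orb a y ?t < 1" "?t \<le> m"
    using tret_Suc_props(1,2,4)[OF ex] m2 mo by auto
  have "enat ?t \<le> kappa a y" using m(1) t1(3) unfolding Sret_def
    using enat_ord_simps(1) order_trans by blast
  then have tS: "?t \<in> ?S" using t1 by (simp add: Sret_def)
  have eq: "{m\<in>?S. m \<le> ?t} = insert ?t ?A"
  proof (rule set_eqI, rule iffI)
    fix q assume q: "q \<in> {m\<in>?S. m \<le> ?t}"
    show "q \<in> insert ?t ?A"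
    proof (cases "q \<le> tret a y i \<or> q = ?t")
      case True then show ?thesis using q by auto
    next
      case False
      then have "tret a y i < q" "q < ?t" using q by auto
      then have "orb a y q \<ge> 1" using tret_Suc_props(3)[OF ex] by blast
      then show ?thesis using q by (simp add: Sret_def)
    qed
  next
    fix q assume "q \<in> insert ?t ?A"
    then show "q \<in> {m\<in>?S. m \<le> ?t}" using tS t1 by auto
  qed
  have "?t \<notin> ?A" using t1 by auto
  then have "card {m\<in>?S. m \<le> ?t} = Suc i" using eq IH(3) finA by simp
  then show ?case using hr tS by simp
qed

lemma sigma_good:
  assumes "enat k \<le> sigma a y"
  shows "hasret a y k" "\<forall>m<tret a y k. orb a y m \<notin> hole a"
proof -
  show "hasret a y k" using sigma_inv[OF assms] by simp
  show "\<forall>m<tret a y k. orb a y m \<notin> hole a"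
  proof (intro allI impI)
    fix m assume m: "m < tret a y k"
    then have "k \<noteq> 0" by (cases k) auto
    then have "tret a y k \<in> Sret a y" using sigma_inv[OF assms] by simp
    then have "enat (tret a y k) \<le> kappa a y" by (simp add: Sret_def)
    then have "enat m < kappa a y" using m
      using enat_ord_simps(2) order_less_le_trans by blast
    then show "orb a y m \<notin> hole a" by (rule kappa_nohole)
  qed
qed

lemma sigma_stop:
  assumes "enat n \<le> sigma a y" "\<not> enat n < sigma a y" "1 \<le> n"
    "hasret a y (Suc n)" "orb a y (tret a y n) \<notin> hole a"
  shows False
proof -
  let ?S = "Sret a y"
  let ?A = "{m\<in>?S. m \<le> tret a y n}"
  have inv: "tret a y n \<in> ?S" "card ?A = n" using sigma_inv[OF assms(1)] assms(3) by auto
  have sig: "sigma a y = enat n" using assms(1,2) by auto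
  then have fin: "finite ?S" and cS: "card ?S = n" using sigma_Sret[of a y]
    by (auto split: if_splits)
  have "?A = ?S"
    using card_subset_eq[OF fin _ ] inv(2) cS by (metis (no_types, lifting) mem_Collect_eq subsetI)
  then have all: "\<And>q. q \<in> ?S \<Longrightarrow> q \<le> tret a y n" by blast
  have tk: "enat (tret a y n) \<le> kappa a y" using inv(1) by (simp add: Sret_def)
  have ex: "\<exists>m>tret a y n. orb a y m < 1" using assms(4) hasret_Suc by blast
  let ?r = "tret a y (Suc n)"
  have r: "tret a y n < ?r" "orb a y ?r < 1" using tret_Suc_props[OF ex] by auto
  show False
  proof (cases "enat ?r \<le> kappa a y")
    case True
    then have "?r \<in> ?S" using r by (simp add: Sret_def)
    then show False using all r by fastforce
  next
    case False
    then have ex2: "\<exists>k. orb a y k \<in> hole a" unfolding kappa_def by (auto split: if_splits)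
    define K where "K = (LEAST k. orb a y k \<in> hole a)"
    have kap: "kappa a y = enat K" using ex2 K_def by (simp add: kappa_def)
    have KH: "orb a y K \<in> hole a" using LeastI_ex[OF ex2] K_def by simp
    have "K \<noteq> tret a y n" using KH assms(5) by auto
    then have "tret a y n < K" using tk kap by simp
    then have "K \<in> ?S" using KH hole_lt1 kap by (simp add: Sret_def)
    then show False using all \<open>tret a y n < K\<close> by fastforce
  qed
qed


lemma main:
  fixes a D e :: real and M :: nat
  assumes a: "1/2 < a" "a \<le> 2/3" and M: "1 \<le> M" and e: "0 \<le> e" "e \<le> 1"
    and E: "hasret a 0 (M-1)"
    and A: "\<And>j. 1 \<le> j \<Longrightarrow> j < M \<Longrightarrow> real j * D \<le> real (tret a 0 j) + e"
    and B: "hasret a 0 M \<Longrightarrow> orb a 0 (tret a 0 (M-1)) \<notin> hole a \<Longrightarrow> real M * D \<le> real (tret a 0 M)"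
  shows "0 \<le> z \<Longrightarrow> z < 1 \<Longrightarrow> hasret a z k \<Longrightarrow> \<forall>m<tret a z k. orb a z m \<notin> hole a
         \<Longrightarrow> real k * D \<le> real (tret a z k) + e"
proof (induction k arbitrary: z rule: less_induct)
  case (less k z)
  note z0 = less.prems(1) and z1 = less.prems(2) and hz = less.prems(3) and nh = less.prems(4)
  show ?case
  proof (cases "k = 0")
    case True then show ?thesis using e by simp
  next
    case False
    then have k1: "1 \<le> k" by simp
    have step: "real k * D \<le> real (tret a z k) + e"
      if j: "1 \<le> j" "j \<le> k" "real j * D \<le> real (tret a z j)" for j
    proof -
      define s where "s = tret a z j"
      define z' where "z' = orb a z s"
      have hz2: "hasret a z (j + (k-j))" using hz j by simp
      have sh: "tret a z k = s + tret a z' (k-j)" "hasret a z' (k-j)"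
        using shift[OF hz2] j unfolding s_def z'_def by auto
      have sk: "s \<le> tret a z k"
      proof (cases "j = k")
        case True then show ?thesis by (simp add: s_def)
      next
        case False then show ?thesis using tret_mono[OF hz, of j k] j s_def by simp
      qed
      have z'0: "0 \<le> z'" unfolding z'_def
        using nonneg[OF a z0] nh sk by auto
      have z'1: "z' < 1" unfolding z'_def s_def using tret_ret[OF hz] j by simp
      have nh': "\<forall>m<tret a z' (k-j). orb a z' m \<notin> hole a"
      proof (intro allI impI)
        fix m assume "m < tret a z' (k-j)"
        then have "m + s < tret a z k" using sh by simp
        then show "orb a z' m \<notin> hole a" using nh unfolding z'_def orb_shift by blast
      qed
      have "k - j < k" using j by simp
      then have ih: "real (k-j) * D \<le> real (tret a z' (k-j)) + e"
        using less.IH z'0 z'1 sh(2) nh' by blast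
      have "real k * D = real j * D + real (k-j) * D" using j
        by (simp add: of_nat_diff algebra_simps)
      also have "\<dots> \<le> real s + (real (tret a z' (k-j)) + e)" using ih j s_def by simp
      also have "\<dots> = real (tret a z k) + e" using sh by simp
      finally show ?thesis .
    qed
    define sh where "sh i \<longleftrightarrow> hasret a 0 i \<and> (\<forall>l\<le>i. tret a z l = tret a 0 l)" for i
    define I where "I = {i. i \<le> min k M \<and> sh i}"
    have finI: "finite I" unfolding I_def by simp
    have I0: "0 \<in> I" unfolding I_def sh_def hasret_def by simp
    define i where "i = Max I"
    have iI: "i \<in> I" using finI I0 i_def Max_in by blast
    have imax: "\<And>i'. i' \<in> I \<Longrightarrow> i' \<le> i" using finI i_def by simp
    have shi: "sh i" and ile: "i \<le> min k M" using iI I_def by auto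
    have shdown: "\<And>i i'. sh i \<Longrightarrow> i' \<le> i \<Longrightarrow> sh i'"
      unfolding sh_def using hasret_mono by auto
    define cond where "cond m \<longleftrightarrow> orb a 0 m \<ge> 1 \<or> (orb a z m < 1 \<and> orb a z m \<notin> hole a)" for m
    have G: "(\<forall>m \<le> tret a 0 i'. cond m) \<and> orb a 0 (tret a 0 i') \<notin> hole a"
      if shi': "sh i'" and ik: "i' < k" for i'
    proof -
      have eqs: "tret a z i' = tret a 0 i'" using shi' sh_def by simp
      have h0: "hasret a 0 i'" using shi' sh_def by simp
      have sk: "tret a 0 i' < tret a z k" using tret_mono[OF hz ik] eqs by simp
      have cnd: "\<forall>m \<le> tret a 0 i'. cond m"
      proof (intro allI impI)
        fix m assume mle: "m \<le> tret a 0 i'"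
        have nhm: "orb a z m \<notin> hole a" using nh mle sk by simp
        show "cond m"
        proof (cases "orb a 0 m < 1")
          case False then show ?thesis by (simp add: cond_def)
        next
          case True
          show ?thesis
          proof (cases "m = 0")
            case True then show ?thesis using z1 nhm by (simp add: cond_def)
          next
            case False
            then obtain l where l: "1 \<le> l" "l \<le> i'" "m = tret a 0 l"
              using ret_char[OF h0 _ mle True] by auto
            then have "m = tret a z l" using shi' sh_def by simp
            then have "orb a z m < 1" using tret_ret[OF hz l(1)] l ik by simp
            then show ?thesis using nhm by (simp add: cond_def)
          qed
        qed
      qed
      have le: "orb a 0 (tret a 0 i') \<le> orb a z (tret a 0 i')"
        using cmp[OF a z0] cnd unfolding cond_def by auto
      have lt: "orb a z (tret a 0 i') < 1"
      proof (cases "i' = 0")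
        case True then show ?thesis using z1 by simp
      next
        case False then show ?thesis using tret_ret[OF hz, of i'] ik eqs by simp
      qed
      have "orb a z (tret a 0 i') \<notin> hole a" using nh sk by simp
      then have "orb a z (tret a 0 i') \<le> (2*a-1)/(1-a)" using nohole_le lt by simp
      then have "orb a 0 (tret a 0 i') \<notin> hole a" using le by (auto simp: hole_def)
      then show ?thesis using cnd by simp
    qed
    have BM: "real M * D \<le> real (tret a z M)" if "sh M" "M \<le> k"
    proof -
      have "sh (M-1)" using shdown that by simp
      then have "orb a 0 (tret a 0 (M-1)) \<notin> hole a" using G that M by simp
      then show ?thesis using B that sh_def by simp
    qed
    show ?thesis
    proof (cases "i = k")
      case True
      then have shk: "sh k" and kM: "k \<le> M" using shi ile by auto
      show ?thesis
      proof (cases "k < M")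
        case True
        then show ?thesis using A[OF k1 True] shk sh_def by simp
      next
        case False
        then have "k = M" using kM by simp
        then show ?thesis using BM shk e by fastforce
      qed
    next
      case ik: False
      show ?thesis
      proof (cases "i = M")
        case True
        then have "M \<le> k" using ile by simp
        then show ?thesis using step[of M] BM shi True M by simp
      next
        case iM: False
        have ik2: "i < k" and iM2: "i < M" using ik iM ile by auto
        define s where "s = tret a 0 i"
        have szs: "tret a z i = s" using shi sh_def s_def by simp
        have Gi: "\<forall>m \<le> s. cond m" "orb a 0 s \<notin> hole a" using G[OF shi ik2] s_def by auto
        have exz: "\<exists>m>tret a z i. orb a z m < 1" using hz ik2 unfolding hasret_def by auto
        define r' where "r' = tret a z (Suc i)"
        have r': "s < r'" "orb a z r' < 1" using tret_Suc_props(1,2)[OF exz] szs r'_def by auto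
        show ?thesis
        proof (cases "\<exists>m>tret a 0 i. orb a 0 m < 1")
          case False
          then have "\<forall>m. cond m" using Gi(1) s_def cond_def by (metis not_le)
          then have "orb a 0 r' \<le> orb a z r'" using cmp[OF a z0] unfolding cond_def by blast
          moreover have "orb a 0 r' \<ge> 1" using False r'(1) s_def by (meson not_le)
          ultimately show ?thesis using r'(2) by simp
        next
          case True
          note ex0 = True
          have h0: "hasret a 0 (Suc i)" using shi sh_def True hasret_Suc by blast
          define r where "r = tret a 0 (Suc i)"
          have r: "s < r" "orb a 0 r < 1" "\<And>m. s < m \<Longrightarrow> m < r \<Longrightarrow> orb a 0 m \<ge> 1"
            using tret_Suc_props(1,2,3)[OF ex0] r_def s_def by auto
          have cr: "\<forall>m<r. cond m"
            using Gi(1) r(3) cond_def by (metis not_le)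
          have "\<not> r' < r"
          proof
            assume "r' < r"
            then have "orb a 0 r' \<le> orb a z r'" using cmp[OF a z0] cr unfolding cond_def by auto
            moreover have "orb a 0 r' \<ge> 1" using r(3) r'(1) \<open>r' < r\<close> by simp
            ultimately show False using r'(2) by simp
          qed
          moreover have "r' \<noteq> r"
          proof
            assume "r' = r"
            then have "sh (Suc i)" using shi h0 r_def r'_def unfolding sh_def
              by (metis le_Suc_eq)
            then have "Suc i \<in> I" using I_def ik2 iM2 by simp
            then show False using imax by fastforce
          qed
          ultimately have rr: "r + 1 \<le> r'" by simp
          have "real (Suc i) * D \<le> real r + 1"
          proof (cases "Suc i < M")
            case True
            then show ?thesis using A[of "Suc i"] e r_def by fastforce
          next
            case False
            then have SM: "Suc i = M" using iM2 by simp
            then have Mi: "M - 1 = i" by simp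
            have "real M * D \<le> real (tret a 0 M)" using B h0 Gi(2) s_def SM unfolding Mi by simp
            then show ?thesis using SM r_def by simp
          qed
          also have "\<dots> \<le> real r'" using rr by simp
          finally show ?thesis using step[of "Suc i"] ik2 r'_def by simp
        qed
      qed
    qed
  qed
qed


lemma rzero:
  assumes a: "1/2 < a" "a \<le> 2/3" and y: "0 \<le> y" "y < 1" and k: "enat k \<le> sigma a y"
  shows "real k * real (tret a 0 1) \<le> real (tret a y k)"
proof -
  have "real k * real (tret a 0 1) \<le> real (tret a y k) + 0"
    using main[of a 1 0 "real (tret a 0 1)" y k] a y sigma_good[OF k]
    by (simp add: hasret_def)
  then show ?thesis by simp
qed

theorem lemma3p2:
  fixes a x :: real and k n :: nat
  assumes "1/2 < a" and "a \<le> 2/3"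
    and "0 \<le> x" and "x < 1"
    and "enat n \<le> sigma a 0"
    and "enat k \<le> sigma a x"
  shows "real (tret a 0 1) \<le> dseq a n \<and>
         real k * dseq a n - (if n \<noteq> 0 then 1 else 0) \<le> real (tret a x k)"
proof (cases "n = 0")
  case True
  then show ?thesis using rzero[OF assms(1,2,3,4,6)] by (simp add: dseq_def)
next
  case False
  note a = assms(1,2)
  let ?t1 = "real (tret a 0 1)"
  let ?F = "(\<lambda>j. (real (tret a 0 j) + 1) / real j) ` {1..n}"
  have finF: "finite ?F" and neF: "?F \<noteq> {}" using False by auto
  have jb: "?t1 \<le> (real (tret a 0 j) + 1) / real j" if j: "j \<in> {1..n}" for j
  proof -
    have "enat j \<le> sigma a 0" using j assms(5) by (meson atLeastAtMost_iff enat_ord_simps(1) order_trans)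
    then have "real j * ?t1 \<le> real (tret a 0 j)" using rzero[OF a, of 0 j] by simp
    then have "real j * ?t1 \<le> real (tret a 0 j) + 1" by simp
    then show ?thesis using j by (simp add: field_simps)
  qed
  have minF: "?t1 \<le> Min ?F" using finF neF jb by (auto intro: Min.boundedI)
  have part1: "?t1 \<le> dseq a n"
  proof (cases "enat n < sigma a 0")
    case True
    then have "enat (Suc n) \<le> sigma a 0" by (simp add: Suc_ile_eq)
    then have "real (Suc n) * ?t1 \<le> real (tret a 0 (Suc n))" using rzero[OF a, of 0 "Suc n"] by simp
    then have "?t1 \<le> real (tret a 0 (n+1)) / real (n+1)" by (simp add: field_simps)
    then show ?thesis using True False minF by (simp add: dseq_def)
  next
    case F2: False
    then show ?thesis using False minF by (simp add: dseq_def)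
  qed
  have dleM: "dseq a n \<le> Min ?F"
  proof (cases "enat n < sigma a 0")
    case True
    then have "dseq a n = min (Min ?F) (real (tret a 0 (n+1)) / real (n+1))"
      using False unfolding dseq_def by (simp only: if_False if_True)
    then show ?thesis by simp
  next
    case F2: False
    then have "dseq a n = Min ?F"
      using False unfolding dseq_def by (simp only: if_False if_True)
    then show ?thesis by simp
  qed
  have A: "real j * dseq a n \<le> real (tret a 0 j) + 1" if "1 \<le> j" "j < Suc n" for j
  proof -
    have "dseq a n \<le> (real (tret a 0 j) + 1) / real j"
      using dleM Min_le[OF finF, of "(real (tret a 0 j) + 1) / real j"] that by force
    then show ?thesis using that by (simp add: field_simps)
  qed
  have B: "real (Suc n) * dseq a n \<le> real (tret a 0 (Suc n))"
    if h: "hasret a 0 (Suc n)" "orb a 0 (tret a 0 (Suc n - 1)) \<notin> hole a"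
  proof (cases "enat n < sigma a 0")
    case True
    then have "dseq a n \<le> real (tret a 0 (n+1)) / real (n+1)" using False by (simp add: dseq_def)
    then show ?thesis by (simp add: field_simps)
  next
    case F2: False
    have "False" using sigma_stop[OF assms(5) F2 _ h(1)] h(2) False by simp
    then show ?thesis ..
  qed
  have "real k * dseq a n \<le> real (tret a x k) + 1"
    using main[of a "Suc n" 1 "dseq a n" x k] a A B sigma_good(1)[OF assms(5)]
      assms(3,4) sigma_good[OF assms(6)] by simp
  then show ?thesis using part1 False by simp
qed

end
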